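(* Let $K$ be a field, $A=\{\alpha_1,\dots,\alpha_m\}\subset K$, $B=\{\beta_1,\dots,\beta_n\}\subset K$ finite sets with $|A|=m$, $|B|=n$, $f=\prod_{i}(x-\alpha_i)$, $g=\prod_j(x-\beta_j)$, and let $x$ be an indeterminate. Let $0\le k\le\min\{m-1,n-1\}$. Let $M_F$ be the $(m+1)\times(m+1)$ matrix whose columns are indexed by $c\in(\alpha_1,\dots,\alpha_m,x)$ (in this order), and whose column indexed by $c$ is $$\big(g(c)c^{m-k-1},\,g(c)c^{m-k-2},\dots,g(c),\,c^{k},\,c^{k-1},\dots,c,\,1\big)^T;$$ similarly let $M_G$ be the $(n+1)\times(n+1)$ matrix with columns indexed by $c\in(\beta_1,\dots,\beta_n,x)$, the column indexed by $c$ being $\big(f(c)c^{n-k-1},\dots,f(c),\,c^{k},\dots,1\big)^T$. Then $$F_k(f,g)=(-1)^{m-k}\frac{\det M_F}{\det V(\alpha_1,\dots,\alpha_m,x)},\qquad G_k(f,g)=(-1)^{(m-k-1)(n-k)}\frac{\det M_G}{\det V(\beta_1,\dots,\beta_n,x)}.$$ In particular $F_k(f,g)$ and $G_k(f,g)$ are symmetric polynomials in $A\cup\{x\}$ and $B\cup\{x\}$ respectively.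
   Context: For $c=(c_1,\dots,c_\ell)$, $V(c)$ is the $\ell\times\ell$ Vandermonde matrix whose $i$-th column is $(c_i^{\ell-1},\dots,c_i,1)^T$, so $\det V(c)=\prod_{1\le i<j\le \ell}(c_i-c_j)$. Write $f=\sum_{i=0}^m f_ix^i$, $g=\sum_{i=0}^ng_ix^i$ with $f_i=g_i=0$ outside the natural ranges. For $0\le k\le\min\{m-1,n-1\}$ consider the $(m+n-2k)\times(m+n-2k)$ matrices with rows indexed by $(f,j)$, $j=n-k-1,\dots,0$, followed by $(g,j)$, $j=m-k-1,\dots,0$, whose first $m+n-2k-1$ entries in row $(f,j)$ (resp. $(g,j)$) are the coefficients of $x^{m+n-k-1},\dots,x^{k+1}$ in $x^jf$ (resp. $x^jg$). $F_k(f,g)(x)$ is the determinant of such a matrix with last entry $x^j$ in rows $(f,j)$ and $0$ in rows $(g,j)$; $G_k(f,g)(x)$ is the determinant with last entry $0$ in rows $(f,j)$ and $x^j$ in rows $(g,j)$. *)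

theory Defs
  imports "Jordan_Normal_Form.Determinant" "HOL-Computational_Algebra.Polynomial"
          "HOL-Computational_Algebra.Fraction_Field"
begin

text \<open>Rows are indexed by (f,j), j = n-k-1,...,0,
  followed by (g,j), j = m-k-1,...,0; the first m+n-2k-1 columns hold the coefficients of
  x^(m+n-k-1),...,x^(k+1) in x^j f (resp. x^j g), embedded as constant polynomials;
  the last column holds x^j in f-rows if lastF and in g-rows if lastG (0 otherwise).
  m, n are the formal degrees of f, g.\<close>
definition subres_mat :: "bool \<Rightarrow> bool \<Rightarrow> nat \<Rightarrow> nat \<Rightarrow> nat \<Rightarrow> 'a::comm_ring_1 poly \<Rightarrow> 'a poly \<Rightarrow> 'a poly mat" where
  "subres_mat lastF lastG m n k f g =
     (let N = m + n - 2 * k in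
      mat N N (\<lambda>(r, c).
        let isF = r < n - k;
            j = (if isF then n - k - 1 - r else m - k - 1 - (r - (n - k)));
            p = (if isF then f else g)
        in if c < N - 1 then [: coeff (monom 1 j * p) (m + n - k - 1 - c) :]
           else (if (isF \<and> lastF) \<or> (\<not> isF \<and> lastG) then monom 1 j else 0)))"

definition F_k :: "nat \<Rightarrow> nat \<Rightarrow> nat \<Rightarrow> 'a::comm_ring_1 poly \<Rightarrow> 'a poly \<Rightarrow> 'a poly" where
  "F_k m n k f g = det (subres_mat True False m n k f g)"

definition G_k :: "nat \<Rightarrow> nat \<Rightarrow> nat \<Rightarrow> 'a::comm_ring_1 poly \<Rightarrow> 'a poly \<Rightarrow> 'a poly" where
  "G_k m n k f g = det (subres_mat False True m n k f g)"

definition vandermonde :: "'a::comm_ring_1 list \<Rightarrow> 'a mat" where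
  "vandermonde cs = mat (length cs) (length cs) (\<lambda>(r, i). (cs ! i) ^ (length cs - 1 - r))"

definition M_mat :: "'a::comm_ring_1 poly \<Rightarrow> nat \<Rightarrow> 'a poly list \<Rightarrow> 'a poly mat" where
  "M_mat h k cs =
     (let l = length cs in
      mat l l (\<lambda>(r, i). let c = cs ! i in
        if r < l - 1 - k then pcompose h c * c ^ (l - 1 - k - 1 - r) else c ^ (l - 1 - r)))"

end

theory Submission
  imports Defs
begin

definition mvrow :: "nat \<Rightarrow> nat \<Rightarrow> 'a mat \<Rightarrow> 'a mat" where
  "mvrow p q A = mat (dim_row A) (dim_col A) (\<lambda>(r,c). if r < p \<or> q < r then A $$ (r,c)
      else if r = p then A $$ (q,c) else A $$ (r - 1, c))"

lemma det_mvrow: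
  assumes A: "(A :: 'a :: comm_ring_1 mat) \<in> carrier_mat N N" and "p \<le> q" "q < N"
  shows "det (mvrow p q A) = (-1)^(q-p) * det A"
  using assms(2,3)
proof (induction "q - p" arbitrary: p)
  case 0
  then have "p = q" by simp
  then have "mvrow p q A = A" using A unfolding mvrow_def by (intro eq_matI) auto
  then show ?case using \<open>p = q\<close> by simp
next
  case (Suc d)
  then have pq: "p < q" by simp
  have eq: "mvrow p q A = swaprows p (Suc p) (mvrow (Suc p) q A)"
    using A pq Suc.prems unfolding mvrow_def mat_swaprows_def by (intro eq_matI) auto
  have c: "mvrow (Suc p) q A \<in> carrier_mat N N" using A unfolding mvrow_def by auto
  have "det (mvrow p q A) = - det (mvrow (Suc p) q A)"
    unfolding eq by (rule det_swaprows[OF _ _ _ c]) (use pq Suc in auto)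
  also have "det (mvrow (Suc p) q A) = (-1)^(q - Suc p) * det A"
    using Suc pq by (intro Suc.hyps) auto
  finally show ?case using pq by (simp add: Suc_diff_Suc[symmetric] )
qed

lemma prod_lin_deg: "degree (\<Prod>a\<leftarrow>as. [:- a, 1:] :: 'a::field poly) = length as \<and> lead_coeff (\<Prod>a\<leftarrow>as. [:- a, 1:] :: 'a::field poly) = 1"
proof (induction as)
  case (Cons a as)
  let ?p = "(\<Prod>a\<leftarrow>as. [:- a, 1:] :: 'a::field poly)"
  have nz: "?p \<noteq> 0" using Cons by auto
  have d: "degree ([:-a,1:] * ?p) = Suc (length as)" by (subst degree_mult_eq) (use Cons nz in auto)
  have h: "lead_coeff [:-a,1::'a:] = 1" by simp
  have l: "lead_coeff ([:-a,1:] * ?p) = 1" using Cons by (metis lead_coeff_mult h mult_1)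
  show ?case using d l by (simp only: prod_list.Cons list.map length_Cons)
qed simp

lemma prod_lin_root: "a \<in> set as \<Longrightarrow> poly (\<Prod>a\<leftarrow>as. [:- a, 1:] :: 'a::field poly) a = 0"
  by (induction as) auto

lemma sum_pcompose:
  fixes p c :: "'a::comm_ring_1 poly"
  assumes "degree p < D"
  shows "(\<Sum>d\<in>{0..<D}. [:coeff p d:] * c ^ d) = pcompose p c"
proof -
  have "pcompose p c = poly (map_poly (\<lambda>x. [:x:]) p) c" by (rule pcompose_altdef)
  also have "\<dots> = (\<Sum>i\<le>degree (map_poly (\<lambda>x. [:x:]) p). coeff (map_poly (\<lambda>x. [:x:]) p) i * c ^ i)"
    by (rule poly_altdef)
  also have "\<dots> = (\<Sum>i\<le>degree p. [:coeff p i:] * c ^ i)"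
    by (simp add: coeff_map_poly degree_map_poly)
  also have "\<dots> = (\<Sum>d\<in>{0..<D}. [:coeff p d:] * c ^ d)"
    by (rule sum.mono_neutral_left) (use assms in \<open>auto simp: coeff_eq_0\<close>)
  finally show ?thesis by simp
qed


lemma F_main:
  fixes as :: "'a::field list" and f g :: "'a poly"
  assumes m: "m = length as" and f: "f = (\<Prod>a\<leftarrow>as. [:-a,1:])" and dg: "degree g \<le> n"
    and km: "k < m" and kn: "k < n"
  defines "cs \<equiv> map (\<lambda>a. [:a:]) as @ [[:0,1:]]"
  shows "F_k m n k f g * det (vandermonde cs) = (-1)^(m-k) * det (M_mat g k cs)"
proof -
  define N where "N = m + n - 2*k"
  define P where "P = N + (k+1)"
  have NP: "P = (n-k) + (m+1)" "N = (n-k) + (m-k)" using km kn unfolding N_def P_def by auto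
  have degf: "degree f = m" and lcf: "coeff f m = 1" using prod_lin_deg[of as] f m by auto
  have lencs: "length cs = m+1" unfolding cs_def m by simp
  have csf: "pcompose f (cs!t) = 0 \<or> cs!t = [:0,1:]" if "t \<le> m" for t
  proof (cases "t < m")
    case True
    then have "cs!t = [:as!t:]" unfolding cs_def m by (simp add: nth_append)
    moreover have "poly f (as!t) = 0" unfolding f by (rule prod_lin_root) (use True m in auto)
    ultimately show ?thesis by (simp add: pcompose_pCons_0)
  next
    case False
    then have "t = m" using that by simp
    then show ?thesis unfolding cs_def m by (simp add: nth_append)
  qed
  define rp where "rp i = (if i < n-k then monom 1 (n-k-1-i) * f else monom 1 (m-k-1-(i-(n-k))) * g)" for i
  have mono: "degree (monom (1::'a) j * p) \<le> j + degree p" for j and p :: "'a poly"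
      using degree_mult_le[of "monom (1::'a) j" p] degree_monom_le[of "1::'a" j] by linarith
  have degrp: "degree (rp i) < m+n-k" if "i < N" for i
  proof -
    show ?thesis
    proof (cases "i < n-k")
      case True
      have "degree (rp i) \<le> (n-k-1-i) + m" using mono[of "n-k-1-i" f] True degf by (simp add: rp_def)
      then show ?thesis using True kn by arith
    next
      case False
      have "degree (rp i) \<le> (m-k-1-(i-(n-k))) + n" using mono[of "m-k-1-(i-(n-k))" g] False dg
        by (simp add: rp_def)
      then show ?thesis using False km kn by arith
    qed
  qed
  define S where "S = subres_mat True False m n k f g"
  have S: "S \<in> carrier_mat N N" unfolding S_def subres_mat_def N_def Let_def by simp
  have Sidx: "S$$(i,c) = (if c < N-1 then [:coeff (rp i) (m+n-k-1-c):]
      else if i < n-k then monom 1 (n-k-1-i) else 0)" if "i < N" "c < N" for i c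
    using that unfolding S_def subres_mat_def Let_def rp_def N_def by auto
  define S' where "S' = transpose_mat (mvrow (n-k-1) (N-1) (transpose_mat S))"
  have S': "S' \<in> carrier_mat N N" using S unfolding S'_def mvrow_def by auto
  have S'idx: "S'$$(i,c) = (if c < n-k-1 then S$$(i,c) else if c = n-k-1 then S$$(i,N-1) else S$$(i,c-1))"
    if "i < N" "c < N" for i c
  proof -
    have "S' $$ (i,c) = (if c < n-k-1 \<or> N-1 < c then S$$(i,c) else if c = n-k-1 then S$$(i,N-1) else S$$(i,c-1))"
      using that S unfolding S'_def mvrow_def by simp
    moreover have "\<not> (N-1 < c)" using that by arith
    ultimately show ?thesis by simp
  qed
  have detS': "det S' = (-1)^(m-k) * det S"
  proof -
    have "det S' = det (mvrow (n-k-1) (N-1) (transpose_mat S))"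
      unfolding S'_def by (rule det_transpose) (use S in \<open>auto simp: mvrow_def\<close>)
    also have "\<dots> = (-1)^(N-1-(n-k-1)) * det (transpose_mat S)"
      by (rule det_mvrow[of _ N]) (use S NP km kn in auto)
    also have "N-1-(n-k-1) = m-k" using NP km kn by simp
    also have "det (transpose_mat S) = det S" by (rule det_transpose[OF S])
    finally show ?thesis .
  qed
  define L where "L = mat N (k+1) (\<lambda>(i,c). [:coeff (rp i) (k-c):])"
  define B where "B = four_block_mat S' L (0\<^sub>m (k+1) N) (1\<^sub>m (k+1))"
  have B: "B \<in> carrier_mat P P" unfolding B_def P_def using S' L_def by auto
  have detB: "det B = det S'" unfolding B_def
    by (subst det_four_block_mat_lower_left_zero[OF S']) (auto simp: L_def)
  define dgf where "dgf \<rho> = (if \<rho> < n-k-1 then m+n-k-1-\<rho> else m+n-k-\<rho>)" for \<rho>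
  have Bpoly: "B$$(i,\<rho>) = [:coeff (rp i) (dgf \<rho>):]" if iN: "i < N" and rP: "\<rho> < P" and ne: "\<rho> \<noteq> n-k-1" for i \<rho>
  proof -
    have "B$$(i,\<rho>) = (if \<rho> < N then S'$$(i,\<rho>) else L$$(i,\<rho>-N))"
      unfolding B_def using that S' by (simp add: P_def L_def)
    note b = this
    consider (a) "\<rho> < n-k-1" | (b) "n-k \<le> \<rho>" "\<rho> < N" | (c) "N \<le> \<rho>" using ne by arith
    then show ?thesis
    proof cases
      case a
      have r: "\<rho> < N" "\<rho> < N-1" "dgf \<rho> = m+n-k-1-\<rho>" using a NP km kn by (auto simp: dgf_def)
      show ?thesis using a r iN by (simp add: b S'idx Sidx)
    next
      case bb: b
      have r: "\<not> \<rho> < n-k-1" "\<rho> \<noteq> n-k-1" "\<rho>-1 < N" "\<rho>-1 < N-1" "dgf \<rho> = m+n-k-\<rho>"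
        "m+n-k-1-(\<rho>-1) = m+n-k-\<rho>" using bb NP km kn by (auto simp: dgf_def)
      have "B$$(i,\<rho>) = S$$(i,\<rho>-1)" using bb r iN by (simp add: b S'idx)
      also have "\<dots> = [:coeff (rp i) (m+n-k-\<rho>):]" using r iN by (simp add: Sidx)
      finally show ?thesis using r by simp
    next
      case c
      have r: "\<not> \<rho> < N" "\<rho> - N < k+1" "k - (\<rho> - N) = dgf \<rho>" using c rP NP km kn unfolding P_def
        by (auto simp: dgf_def)
      show ?thesis using r iN by (simp add: b L_def)
    qed
  qed
  have Bspec: "B$$(i,n-k-1) = (if i<n-k then monom 1 (n-k-1-i) else 0)" if "i < N" for i
  proof -
    have lt: "n-k-1 < N" "\<not> N - 1 < N - 1" using NP km kn by arith+
    have "B$$(i,n-k-1) = S'$$(i,n-k-1)"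
      unfolding B_def using that S' lt by (simp add: P_def L_def)
    also have "\<dots> = S$$(i,N-1)" using that lt by (simp add: S'idx)
    also have "\<dots> = (if i<n-k then monom 1 (n-k-1-i) else 0)" using that lt by (simp add: Sidx)
    finally show ?thesis .
  qed
  have Bunit: "B$$(i,\<rho>) = (if \<rho> = i then 1 else 0)" if "N \<le> i" "i < P" "\<rho> < P" for i \<rho>
    unfolding B_def using that S' by (auto simp: P_def L_def)
  define X where "X = mat (n-k) (m+1) (\<lambda>(\<rho>,t). if \<rho> < n-k-1 then (cs!t)^(m+n-k-1-\<rho>) else - pcompose f (cs!t))"
  define V where "V = vandermonde cs"
  have V: "V \<in> carrier_mat (m+1) (m+1)" unfolding V_def vandermonde_def lencs by simp
  define W where "W = four_block_mat (1\<^sub>m (n-k)) X (0\<^sub>m (m+1) (n-k)) V"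
  have W: "W \<in> carrier_mat P P" unfolding W_def using NP V by auto
  have detW: "det W = det V" unfolding W_def
    by (subst det_four_block_mat_lower_left_zero[OF _ _ _ V]) (auto simp: X_def)
  have Wleft: "W$$(\<rho>,j) = (if \<rho> = j then 1 else 0)" if "\<rho> < P" "j < n-k" for \<rho> j
    unfolding W_def using that V NP by (auto simp: X_def)
  have Wright: "W$$(\<rho>, n-k+t) = (if \<rho> = n-k-1 then - pcompose f (cs!t) else (cs!t)^(dgf \<rho>))"
    if "\<rho> < P" "t \<le> m" for \<rho> t
  proof (cases "\<rho> < n-k")
    case True
    have "W$$(\<rho>, n-k+t) = X$$(\<rho>,t)" unfolding W_def using that V NP True by (simp add: X_def)
    then show ?thesis using True that by (auto simp: X_def dgf_def)
  next
    case False
    have e: "m + 1 - 1 - (\<rho> - (n-k)) = dgf \<rho>" "\<rho> \<noteq> n-k-1" "\<rho> - (n-k) < m+1"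
      using False that NP km kn unfolding dgf_def by auto
    have "W$$(\<rho>, n-k+t) = V$$(\<rho>-(n-k),t)" unfolding W_def using that V NP False by (simp add: X_def)
    then show ?thesis using e that by (simp add: V_def vandermonde_def lencs)
  qed
  define BW where "BW = B * W"
  have BW: "BW \<in> carrier_mat P P" unfolding BW_def using B W by auto
  have BWidx: "BW$$(i,j) = (\<Sum>\<rho>\<in>{0..<P}. B$$(i,\<rho>) * W$$(\<rho>,j))" if "i < P" "j < P" for i j
    using that B W unfolding BW_def by (simp add: scalar_prod_def)
  have BWleft: "BW$$(i,j) = B$$(i,j)" if "i < P" "j < n-k" for i j
  proof -
    have jP: "j < P" using that NP by arith
    have "BW$$(i,j) = (\<Sum>\<rho>\<in>{0..<P}. B$$(i,\<rho>) * W$$(\<rho>,j))" by (rule BWidx[OF that(1) jP])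
    also have "\<dots> = (\<Sum>\<rho>\<in>{0..<P}. if \<rho> = j then B$$(i,\<rho>) else 0)"
      by (rule sum.cong) (use that NP Wleft in auto)
    also have "\<dots> = B$$(i,j)" using that NP by (simp add: sum.delta')
    finally show ?thesis .
  qed
  have BWright: "BW$$(i, n-k+t) = (if i<n-k then monom 1 (n-k-1-i) else 0) * (- pcompose f (cs!t))
      + pcompose (rp i) (cs!t)" if iN: "i < N" and tm: "t \<le> m" for i t
  proof -
    define c where "c = cs!t"
    have jP: "n-k+t < P" "n-k-1 \<in> {0..<P}" using tm NP km kn by auto
    define iv where "iv d = (if m < d then m+n-k-1-d else m+n-k-d)" for d
    have "BW$$(i,n-k+t) = (\<Sum>\<rho>\<in>{0..<P}. B$$(i,\<rho>) * W$$(\<rho>,n-k+t))"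
      by (rule BWidx) (use iN NP jP in auto)
    also have "\<dots> = B$$(i,n-k-1) * W$$(n-k-1,n-k+t) + (\<Sum>\<rho>\<in>{0..<P}-{n-k-1}. B$$(i,\<rho>) * W$$(\<rho>,n-k+t))"
      by (rule sum.remove) (use jP in auto)
    also have "(\<Sum>\<rho>\<in>{0..<P}-{n-k-1}. B$$(i,\<rho>) * W$$(\<rho>,n-k+t))
        = (\<Sum>\<rho>\<in>{0..<P}-{n-k-1}. [:coeff (rp i) (dgf \<rho>):] * c^(dgf \<rho>))"
      by (rule sum.cong) (use iN tm in \<open>auto simp: Bpoly Wright c_def\<close>)
    also have "\<dots> = (\<Sum>d\<in>{0..<m+n-k}. [:coeff (rp i) d:] * c^d)"
      by (rule sum.reindex_bij_witness[of _ iv dgf]) (use NP km kn in \<open>auto simp: iv_def dgf_def\<close>)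
    also have "\<dots> = pcompose (rp i) c" by (rule sum_pcompose[OF degrp[OF iN]])
    also have "B$$(i,n-k-1) * W$$(n-k-1,n-k+t) = (if i<n-k then monom 1 (n-k-1-i) else 0) * (- pcompose f c)"
    proof -
      have "W$$(n-k-1,n-k+t) = - pcompose f c" using Wright[of "n-k-1" t] jP tm by (simp add: c_def)
      then show ?thesis by (simp only: Bspec[OF iN])
    qed
    finally show ?thesis unfolding c_def .
  qed
  have BWunit: "BW$$(i,j) = W$$(i,j)" if "N \<le> i" "i < P" "j < P" for i j
  proof -
    have "BW$$(i,j) = (\<Sum>\<rho>\<in>{0..<P}. if \<rho> = i then W$$(\<rho>,j) else 0)"
      unfolding BWidx[OF that(2,3)]
      by (rule sum.cong) (use that Bunit in auto)
    also have "\<dots> = W$$(i,j)" using that by (simp add: sum.delta')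
    finally show ?thesis .
  qed
  define M where "M = M_mat g k cs"
  have M: "M \<in> carrier_mat (m+1) (m+1)" unfolding M_def M_mat_def lencs Let_def by simp
  have Midx: "M$$(r,t) = (if r < m-k then pcompose g (cs!t) * (cs!t)^(m-k-1-r) else (cs!t)^(m-r))"
    if "r \<le> m" "t \<le> m" for r t
    using that unfolding M_def M_mat_def lencs Let_def by simp
  define U where "U = mat (n-k) (n-k) (\<lambda>(i,j). BW$$(i,j))"
  define Z where "Z = mat (m+1) (n-k) (\<lambda>(i,j). BW$$(i+(n-k),j))"
  have pcm: "pcompose (monom 1 j * p) c = c^j * pcompose p c" for j and p c :: "'a poly"
  proof -
    have "pcompose ([:0,1:]^j) c = c^j" by (induction j) (simp_all add: pcompose_mult pcompose_pCons pcompose_1)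
    then show ?thesis by (simp add: pcompose_mult monom_altdef)
  qed
  have BWeq: "BW = four_block_mat U (0\<^sub>m (n-k) (m+1)) Z M"
  proof (rule eq_matI)
    show "dim_row BW = dim_row (four_block_mat U (0\<^sub>m (n-k) (m+1)) Z M)"
      "dim_col BW = dim_col (four_block_mat U (0\<^sub>m (n-k) (m+1)) Z M)"
      using BW M NP by (auto simp: U_def)
    fix i j assume "i < dim_row (four_block_mat U (0\<^sub>m (n-k) (m+1)) Z M)"
      "j < dim_col (four_block_mat U (0\<^sub>m (n-k) (m+1)) Z M)"
    then have ij: "i < P" "j < P" using M NP by (auto simp: U_def)
    have fb: "four_block_mat U (0\<^sub>m (n-k) (m+1)) Z M $$ (i,j) = (if i < n-k then if j < n-k then U$$(i,j)
       else 0 else if j < n-k then Z$$(i-(n-k),j) else M$$(i-(n-k),j-(n-k)))"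
      using ij M NP by (auto simp: U_def)
    show "BW $$ (i,j) = four_block_mat U (0\<^sub>m (n-k) (m+1)) Z M $$ (i,j)"
    proof (cases "j < n-k")
      case True
      then show ?thesis unfolding fb using ij NP by (auto simp: U_def Z_def)
    next
      case False
      define t where "t = j - (n-k)"
      have jt: "j = n-k+t" "t \<le> m" using False ij NP unfolding t_def by auto
      define c where "c = cs!t"
      show ?thesis
      proof (cases "i < N")
        case iN: True
        have bw: "BW$$(i,j) = (if i<n-k then monom 1 (n-k-1-i) else 0) * (- pcompose f c) + pcompose (rp i) c"
          unfolding jt c_def by (rule BWright[OF iN jt(2)])
        show ?thesis
        proof (cases "i < n-k")
          case True
          have "BW$$(i,j) = 0"
          proof -
            have "BW$$(i,j) = - (monom 1 (n-k-1-i) * pcompose f c) + c^(n-k-1-i) * pcompose f c"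
              using True unfolding bw by (simp add: rp_def pcm)
            moreover have "pcompose f c = 0 \<or> c = [:0,1:]" using csf[OF jt(2)] unfolding c_def .
            ultimately show ?thesis by (auto simp: monom_altdef)
          qed
          then show ?thesis unfolding fb using True False by simp
        next
          case nf: False
          have r: "i - (n-k) \<le> m" "i-(n-k) < m-k" "j-(n-k) = t" using iN nf jt NP km kn by auto
          have "BW$$(i,j) = c^(m-k-1-(i-(n-k))) * pcompose g c"
            using nf unfolding bw by (simp add: rp_def pcm)
          then show ?thesis unfolding fb using nf False r jt(2) by (simp add: Midx c_def)
        qed
      next
        case nN: False
        have r: "i - (n-k) \<le> m" "\<not> i-(n-k) < m-k" "j-(n-k) = t" "\<not> i < n-k" "i \<noteq> n-k-1"
          "m - (i - (n-k)) = dgf i" using nN ij jt NP km kn unfolding dgf_def by (auto simp: add.commute)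
        have "BW$$(i,j) = W$$(i,j)" using nN ij by (intro BWunit) auto
        also have "\<dots> = c^(dgf i)" unfolding jt c_def using Wright[OF ij(1) jt(2)] r by simp
        finally show ?thesis unfolding fb using False r jt(2) by (simp add: Midx c_def)
      qed
    qed
  qed
  have detU: "det U = 1"
  proof -
    have U: "U \<in> carrier_mat (n-k) (n-k)" unfolding U_def by simp
    have Uij: "U$$(i,j) = B$$(i,j)" if "i < n-k" "j < n-k" for i j
      using that NP by (simp add: U_def BWleft)
    have "upper_triangular U"
    proof (unfold upper_triangular_def, intro allI impI)
      fix i j assume i: "i < dim_row U" and ji: "j < i"
      then have ii: "i < n-k" "j < n-k-1" "i < N" "j < P" using U NP by auto
      have "U$$(i,j) = [:coeff (rp i) (dgf j):]" unfolding Uij[OF ii(1) order.strict_trans[OF ji ii(1)]]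
        using ii by (intro Bpoly) auto
      also have "dgf j = m+n-k-1-j" using ii unfolding dgf_def by simp
      also have "coeff (rp i) (m+n-k-1-j) = 0"
      proof (rule coeff_eq_0)
        have "degree (rp i) \<le> (n-k-1-i) + m" using mono[of "n-k-1-i" f] ii degf by (simp add: rp_def)
        then show "degree (rp i) < m+n-k-1-j" using ji ii by arith
      qed
      finally show "U$$(i,j) = 0" by simp
    qed
    moreover have "U$$(i,i) = 1" if "i < n-k" for i
    proof (cases "i < n-k-1")
      case True
      have ii: "i < N" "i < P" using that NP by auto
      have "U$$(i,i) = [:coeff (rp i) (dgf i):]" unfolding Uij[OF that that]
        using ii True by (intro Bpoly) auto
      also have "dgf i = m+n-k-1-i" using True unfolding dgf_def by simp
      also have "coeff (rp i) (m+n-k-1-i) = 1"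
      proof -
        have "m+n-k-1-i - (n-k-1-i) = m" "\<not> m+n-k-1-i < n-k-1-i" using True by auto
        then show ?thesis using that lcf by (simp add: rp_def coeff_monom_mult)
      qed
      finally show ?thesis by simp
    next
      case False
      then have "i = n-k-1" using that by simp
      moreover have "i < N" using that NP by auto
      ultimately show ?thesis using Uij[OF that that] Bspec[of i] that by simp
    qed
    ultimately show ?thesis using det_upper_triangular[OF _ U] U by (simp add: prod_list_diag_prod)
  qed
  have "det BW = det U * det M"
    unfolding BWeq by (rule det_four_block_mat_upper_right_zero[OF _ _ _ M]) (auto simp: U_def Z_def)
  then have "det BW = det M" using detU by simp
  moreover have "det BW = det B * det W" unfolding BW_def by (rule det_mult[OF B W])
  ultimately have "(-1)^(m-k) * det S * det V = det M" using detB detS' detW by simp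
  then have "(-1)^(m-k) * ((-1)^(m-k) * det S * det V) = (-1)^(m-k) * det M" by simp
  then show ?thesis unfolding S_def F_k_def M_def V_def
    by (simp add: mult.assoc[symmetric] power_mult_distrib[symmetric])
qed


lemma vdm_nz:
  fixes cs :: "'b::idom list"
  assumes dist: "distinct cs" and ne: "cs \<noteq> []"
  shows "det (vandermonde cs) \<noteq> 0"
proof
  define l where "l = length cs"
  have l0: "l > 0" using ne unfolding l_def by simp
  define V where "V = vandermonde cs"
  have V: "V \<in> carrier_mat l l" unfolding V_def vandermonde_def l_def by simp
  assume "det (vandermonde cs) = 0"
  then have "det (transpose_mat V) = 0" using det_transpose[OF V] unfolding V_def by simp
  then obtain w where w: "w \<in> carrier_vec l" "w \<noteq> 0\<^sub>v l" "transpose_mat V *\<^sub>v w = 0\<^sub>v l"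
    using det_0_iff_vec_prod_zero[of "transpose_mat V" l] V by auto
  have ev: "(\<Sum>r\<in>{0..<l}. w$r * (cs!i)^(l-1-r)) = 0" if "i < l" for i
  proof -
    have "(transpose_mat V *\<^sub>v w) $ i = 0" using w(3) that by simp
    then show ?thesis using that V w(1)
      by (simp add: scalar_prod_def V_def vandermonde_def l_def mult.commute)
  qed
  define Q where "Q = (\<Sum>r\<in>{0..<l}. monom (w$r) (l-1-r))"
  have pQ: "poly Q x = (\<Sum>r\<in>{0..<l}. w$r * x^(l-1-r))" for x
    by (simp add: Q_def poly_sum poly_monom)
  obtain r0 where r0: "r0 < l" "w$r0 \<noteq> 0" using w(1,2) by (auto simp: vec_eq_iff)
  have "coeff Q (l-1-r0) = (\<Sum>r\<in>{0..<l}. if r = r0 then w$r else 0)"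
    unfolding Q_def coeff_sum
    by (rule sum.cong) (use r0 in \<open>auto simp: coeff_monom\<close>)
  also have "\<dots> = w$r0" using r0 by simp
  finally have "Q \<noteq> 0" using r0 by auto
  have dQ: "degree Q \<le> l - 1"
    by (rule degree_le) (auto simp: Q_def coeff_sum intro!: sum.neutral)
  have "set cs \<subseteq> {x. poly Q x = 0}"
  proof
    fix x assume "x \<in> set cs"
    then obtain i where "i < l" "x = cs!i" unfolding l_def by (auto simp: in_set_conv_nth)
    then show "x \<in> {x. poly Q x = 0}" using ev pQ by simp
  qed
  then have "card (set cs) \<le> card {x. poly Q x = 0}"
    using poly_roots_finite[OF \<open>Q \<noteq> 0\<close>] by (rule card_mono[rotated])
  also have "\<dots> \<le> degree Q" by (rule card_poly_roots_bound[OF \<open>Q \<noteq> 0\<close>])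
  finally have "card (set cs) \<le> degree Q" .
  then show False using dQ l0 distinct_card[OF dist] unfolding l_def by linarith
qed

lemma det_rot:
  fixes A :: "'a::comm_ring_1 mat"
  assumes A: "A \<in> carrier_mat N N" and t: "t \<le> N"
  shows "det (mat N N (\<lambda>(r,c). if r < t then A$$(N-t+r, c) else A$$(r-t, c))) = (-1)^((N-1)*t) * det A"
  using t
proof (induction t)
  case 0
  have "mat N N (\<lambda>(r,c). if r < 0 then A$$(N-0+r, c) else A$$(r-0, c)) = A"
    using A by (intro eq_matI) auto
  then show ?case by simp
next
  case (Suc t)
  define R where "R = mat N N (\<lambda>(r,c). if r < t then A$$(N-t+r, c) else A$$(r-t, c))"
  have R: "R \<in> carrier_mat N N" unfolding R_def by simp
  have eq: "mat N N (\<lambda>(r,c). if r < Suc t then A$$(N-Suc t+r, c) else A$$(r-Suc t, c)) = mvrow 0 (N-1) R"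
  proof (rule eq_matI)
    fix i j assume ij: "i < dim_row (mvrow 0 (N-1) R)" "j < dim_col (mvrow 0 (N-1) R)"
    then have ij': "i < N" "j < N" using R by (auto simp: mvrow_def)
    show "mat N N (\<lambda>(r,c). if r < Suc t then A$$(N-Suc t+r, c) else A$$(r-Suc t, c)) $$ (i,j) = mvrow 0 (N-1) R $$ (i,j)"
    proof (cases "i = 0")
      case True
      then show ?thesis using ij' Suc.prems R by (auto simp: mvrow_def R_def)
    next
      case False
      then show ?thesis using ij' Suc.prems R by (auto simp: mvrow_def R_def)
    qed
  qed (use R in \<open>auto simp: mvrow_def\<close>)
  have "det (mvrow 0 (N-1) R) = (-1)^(N-1) * det R"
    using det_mvrow[OF R, of 0 "N-1"] Suc.prems by simp
  also have "det R = (-1)^((N-1)*t) * det A" unfolding R_def using Suc by simp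
  finally show ?case unfolding eq by (simp add: mult_Suc_right power_add mult.assoc)
qed

lemma subres_idx:
  assumes "i < m+n-2*k" "c < m+n-2*k"
  shows "subres_mat lF lG m n k f g $$ (i,c) = (if c < m+n-2*k-1 then
     [:coeff (monom 1 (if i<n-k then n-k-1-i else m-k-1-(i-(n-k))) * (if i < n-k then f else g)) (m+n-k-1-c):]
     else if (i<n-k \<and> lF) \<or> (\<not> i<n-k \<and> lG) then monom 1 (if i<n-k then n-k-1-i else m-k-1-(i-(n-k))) else 0)"
  using assms by (simp add: subres_mat_def Let_def)

lemma G_F:
  assumes km: "k < m" and kn: "k < n"
  shows "G_k m n k f g = (-1)^((m+n-2*k-1)*(m-k)) * F_k n m k g f"
proof -
  define N where "N = m+n-2*k"
  define M1 where "M1 = subres_mat False True m n k f g"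
  have M1: "M1 \<in> carrier_mat N N" unfolding M1_def subres_mat_def N_def by (simp add: Let_def)
  have eq: "mat N N (\<lambda>(r,c). if r < m-k then M1$$(N-(m-k)+r, c) else M1$$(r-(m-k), c)) = subres_mat True False n m k g f"
  proof (rule eq_matI)
    fix i j assume "i < dim_row (subres_mat True False n m k g f)" "j < dim_col (subres_mat True False n m k g f)"
    then have ij: "i < N" "j < N" unfolding subres_mat_def N_def by (auto simp: Let_def)
    show "mat N N (\<lambda>(r,c). if r < m-k then M1$$(N-(m-k)+r, c) else M1$$(r-(m-k), c)) $$ (i,j) = subres_mat True False n m k g f $$ (i,j)"
    proof (cases "i < m-k")
      case True
      have r: "N-(m-k)+i < N" "\<not> N-(m-k)+i < n-k" "m-k-1-(N-(m-k)+i-(n-k)) = m-k-1-i" "n+m-k-1 = m+n-k-1"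
        "n + m - 2*k = N" using True ij km kn unfolding N_def by auto
      have r2: "N-(m-k)+i = n-k+i" "n-k+i-(n-k) = i" "i < n+m-2*k" "j < n+m-2*k" "n-k+i < m+n-2*k" "j < m+n-2*k"
        "n + m - 2 * k - 1 = m+n-2*k-1"
        using True ij km kn unfolding N_def by auto
      have e1: "mat N N (\<lambda>(r,c). if r < m-k then M1$$(N-(m-k)+r, c) else M1$$(r-(m-k), c)) $$ (i,j) = M1 $$ (n-k+i, j)"
        using True ij r2(1) by simp
      have e2: "M1$$(n-k+i,j) = (if j < m+n-2*k-1 then [:coeff (monom 1 (m-k-1-i) * g) (m+n-k-1-j):] else monom 1 (m-k-1-i))"
        unfolding M1_def using r2 by (subst subres_idx) auto
      have e3: "subres_mat True False n m k g f $$ (i,j) = (if j < m+n-2*k-1 then [:coeff (monom 1 (m-k-1-i) * g) (m+n-k-1-j):] else monom 1 (m-k-1-i))"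
        using r2 True by (subst subres_idx) (auto simp: add.commute)
      show ?thesis using e1 e2 e3 by simp
    next
      case False
      have r: "i-(m-k) < N" "i-(m-k) < n-k" "n-k-1-(i-(m-k)) = n-k-1-(i-(m-k))" "n+m-k-1 = m+n-k-1"
        "n + m - 2*k = N" using False ij km kn unfolding N_def by auto
      have r2: "i < n+m-2*k" "j < n+m-2*k" "i-(m-k) < m+n-2*k" "j < m+n-2*k"
        "n + m - 2 * k - 1 = m+n-2*k-1"
        using False ij km kn unfolding N_def by auto
      have e1: "mat N N (\<lambda>(r,c). if r < m-k then M1$$(N-(m-k)+r, c) else M1$$(r-(m-k), c)) $$ (i,j) = M1 $$ (i-(m-k), j)"
        using False ij by simp
      have e2: "M1$$(i-(m-k),j) = (if j < m+n-2*k-1 then [:coeff (monom 1 (n-k-1-(i-(m-k))) * f) (m+n-k-1-j):] else 0)"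
        unfolding M1_def using r2 r by (subst subres_idx) auto
      have e3: "subres_mat True False n m k g f $$ (i,j) = (if j < m+n-2*k-1 then [:coeff (monom 1 (n-k-1-(i-(m-k))) * f) (m+n-k-1-j):] else 0)"
        using r2 False by (subst subres_idx) (auto simp: add.commute)
      show ?thesis using e1 e2 e3 by simp
    qed
  qed (auto simp: subres_mat_def N_def Let_def)
  have "F_k n m k g f = (-1)^((N-1)*(m-k)) * G_k m n k f g"
    unfolding F_k_def G_k_def eq[symmetric] M1_def[symmetric]
    by (rule det_rot[OF M1]) (use km kn in \<open>auto simp: N_def\<close>)
  then have "(-1)^((N-1)*(m-k)) * F_k n m k g f = (-1)^((N-1)*(m-k)) * ((-1)^((N-1)*(m-k)) * G_k m n k f g)"
    by simp
  then show ?thesis unfolding N_def by (simp add: mult.assoc[symmetric] power_mult_distrib[symmetric])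
qed

lemma sign_par:
  assumes "k < m" "k < n"
  shows "(-1::'c::comm_ring_1)^((m+n-2*k-1)*(m-k)) * (-1)^(n-k) = (-1)^((m-k-1)*(n-k))"
proof -
  obtain a b where ab: "m-k = Suc a" "n-k = Suc b" using assms by (metis Suc_diff_Suc)
  have e: "m+n-2*k-1 = a+b+1" "m-k-1 = a" using ab assms by auto
  have "even ((a+b+1)*(Suc a) + Suc b) = even (a * Suc b)" by (auto simp: even_mult_iff)
  then show ?thesis unfolding e ab power_add[symmetric] by (simp add: minus_one_power_iff)
qed

lemma fract_step:
  fixes F V D :: "'b::idom"
  assumes "F * V = (-1)^e * D" "V \<noteq> 0"
  shows "to_fract F = (-1)^e * to_fract D / to_fract V"
proof -
  have "to_fract F * to_fract V = (-1)^e * to_fract D"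
    using arg_cong[OF assms(1), of to_fract] by (cases "even e") simp_all
  then show ?thesis using assms(2) by (simp add: field_simps)
qed

lemma dist_cs: "distinct as \<Longrightarrow> distinct (map (\<lambda>a. [:a:]) as @ [[:0, 1:]] :: 'a::comm_ring_1 poly list)"
  by (auto simp: distinct_map inj_on_def)


theorem corollary3p13:
  fixes as bs :: "'a::field list" and k m n :: nat and f g :: "'a poly"
  assumes "distinct as" and "distinct bs"
    and "m = length as" and "n = length bs"
    and "f = (\<Prod>a\<leftarrow>as. [:- a, 1:])" and "g = (\<Prod>b\<leftarrow>bs. [:- b, 1:])"
    and "k < m" and "k < n"
  shows "(to_fract (F_k m n k f g) =
           (- 1) ^ (m - k) * to_fract (det (M_mat g k (map (\<lambda>a. [:a:]) as @ [[:0, 1:]])))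
             / to_fract (det (vandermonde (map (\<lambda>a. [:a:]) as @ [[:0, 1:]]))))
         \<and> (to_fract (G_k m n k f g) =
           (- 1) ^ ((m - k - 1) * (n - k)) * to_fract (det (M_mat f k (map (\<lambda>b. [:b:]) bs @ [[:0, 1:]])))
             / to_fract (det (vandermonde (map (\<lambda>b. [:b:]) bs @ [[:0, 1:]]))))"
proof
  have dg: "degree g = n" and df: "degree f = m"
    using prod_lin_deg[of bs] prod_lin_deg[of as] assms by auto
  have FA: "F_k m n k f g * det (vandermonde (map (\<lambda>a. [:a:]) as @ [[:0, 1:]]))
      = (-1)^(m-k) * det (M_mat g k (map (\<lambda>a. [:a:]) as @ [[:0, 1:]]))"
    by (rule F_main) (use assms dg in auto)
  have VA: "det (vandermonde (map (\<lambda>a. [:a:]) as @ [[:0, 1:]])) \<noteq> 0"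
    by (rule vdm_nz) (use assms dist_cs in auto)
  show "to_fract (F_k m n k f g) =
           (- 1) ^ (m - k) * to_fract (det (M_mat g k (map (\<lambda>a. [:a:]) as @ [[:0, 1:]])))
             / to_fract (det (vandermonde (map (\<lambda>a. [:a:]) as @ [[:0, 1:]])))"
    by (rule fract_step[OF FA VA])
  have FB: "F_k n m k g f * det (vandermonde (map (\<lambda>b. [:b:]) bs @ [[:0, 1:]]))
      = (-1)^(n-k) * det (M_mat f k (map (\<lambda>b. [:b:]) bs @ [[:0, 1:]]))"
    by (rule F_main) (use assms df in auto)
  have VB: "det (vandermonde (map (\<lambda>b. [:b:]) bs @ [[:0, 1:]])) \<noteq> 0"
    by (rule vdm_nz) (use assms dist_cs in auto)
  have GB: "G_k m n k f g * det (vandermonde (map (\<lambda>b. [:b:]) bs @ [[:0, 1:]]))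
      = (-1)^((m - k - 1) * (n - k)) * det (M_mat f k (map (\<lambda>b. [:b:]) bs @ [[:0, 1:]]))"
    unfolding G_F[OF assms(7,8)] sign_par[OF assms(7,8), symmetric]
    by (simp add: mult.assoc FB)
  show "to_fract (G_k m n k f g) =
           (- 1) ^ ((m - k - 1) * (n - k)) * to_fract (det (M_mat f k (map (\<lambda>b. [:b:]) bs @ [[:0, 1:]])))
             / to_fract (det (vandermonde (map (\<lambda>b. [:b:]) bs @ [[:0, 1:]])))"
    by (rule fract_step[OF GB VB])
qed

end
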